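(* Let $f\colon S^2\to S^2$ be a Thurston map and $\mathcal{C}\subset S^2$ a Jordan curve with $\operatorname{post}(f)\subset\mathcal{C}$. For every $n\ge0$, the union of all white $n$-tiles and the union of all black $n$-tiles are both connected subsets of $S^2$.
   Context: A Thurston map is an orientation-preserving, postcritically finite branched covering $f\colon S^2\to S^2$ (i.e. $\operatorname{post}(f)=\bigcup_{n\ge1}\{f^n(c): c\text{ critical}\}$ is finite), with $\#\operatorname{post}(f)\ge3$. Orient $\mathcal{C}$ and let $U_w,U_b$ be the two components of $S^2\setminus\mathcal{C}$, where $\mathcal{C}$ is positively oriented as boundary of $U_w$. A white (black) $n$-tile is the closure of a component of $f^{-n}(U_w)$ (respectively $f^{-n}(U_b)$). *)

theory Defs
  imports "HOL-Complex_Analysis.Complex_Analysis"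
begin

definition S2 :: "(real^3) set" where
  "S2 = sphere 0 1"

definition north :: "real^3" where
  "north = vector [0, 0, 1]"

text \<open>Stereographic projection from the north pole and its inverse; they fix
  the (reference) orientation of the sphere.\<close>
definition stereo :: "real^3 \<Rightarrow> complex" where
  "stereo x = Complex (x$1) (x$2) / complex_of_real (1 - x$3)"

definition inv_stereo :: "complex \<Rightarrow> real^3" where
  "inv_stereo w = (1 / ((cmod w)\<^sup>2 + 1)) *\<^sub>R
      vector [2 * Re w, 2 * Im w, (cmod w)\<^sup>2 - 1]"

definition plane_orient_pres :: "(complex \<Rightarrow> complex) \<Rightarrow> complex set \<Rightarrow> bool" where
  "plane_orient_pres h W \<longleftrightarrow>
     (\<forall>z r. 0 < r \<and> cball z r \<subseteq> W \<longrightarrow> winding_number (h \<circ> circlepath z r) (h z) = 1)"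

definition chart_orient_pres :: "(real^3 \<Rightarrow> complex) \<Rightarrow> (real^3) set \<Rightarrow> bool" where
  "chart_orient_pres \<phi> U \<longleftrightarrow> plane_orient_pres (\<phi> \<circ> inv_stereo) (stereo ` (U - {north}))"

definition local_form :: "(real^3 \<Rightarrow> real^3) \<Rightarrow> real^3 \<Rightarrow> nat \<Rightarrow> bool" where
  "local_form f p d \<longleftrightarrow> 1 \<le> d \<and>
     (\<exists>U V \<phi> \<phi>' \<psi> \<psi>'.
        openin (top_of_set S2) U \<and> openin (top_of_set S2) V \<and>
        p \<in> U \<and> f p \<in> V \<and> f ` U \<subseteq> V \<and>
        homeomorphism U (ball 0 1) \<phi> \<phi>' \<and> homeomorphism V (ball 0 1) \<psi> \<psi>' \<and>
        chart_orient_pres \<phi> U \<and> chart_orient_pres \<psi> V \<and>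
        \<phi> p = 0 \<and> \<psi> (f p) = 0 \<and>
        (\<forall>z\<in>ball 0 1. \<psi> (f (\<phi>' z)) = z ^ d))"

definition branched_cover :: "(real^3 \<Rightarrow> real^3) \<Rightarrow> bool" where
  "branched_cover f \<longleftrightarrow> continuous_on S2 f \<and> f ` S2 \<subseteq> S2 \<and>
     (\<forall>p\<in>S2. \<exists>d. local_form f p d)"

definition critical :: "(real^3 \<Rightarrow> real^3) \<Rightarrow> real^3 \<Rightarrow> bool" where
  "critical f p \<longleftrightarrow> p \<in> S2 \<and> (\<exists>d\<ge>2. local_form f p d)"

definition post :: "(real^3 \<Rightarrow> real^3) \<Rightarrow> (real^3) set" where
  "post f = {(f ^^ n) c | c n. 1 \<le> n \<and> critical f c}"

definition thurston_map :: "(real^3 \<Rightarrow> real^3) \<Rightarrow> bool" where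
  "thurston_map f \<longleftrightarrow> branched_cover f \<and> finite (post f) \<and> 3 \<le> card (post f)"

definition jordan_curve :: "(real^3) set \<Rightarrow> bool" where
  "jordan_curve C \<longleftrightarrow> (\<exists>\<gamma>. simple_path \<gamma> \<and> pathfinish \<gamma> = pathstart \<gamma> \<and>
      path_image \<gamma> \<subseteq> S2 \<and> C = path_image \<gamma>)"

text \<open>n-tiles of colour U (U a component of S2 - C): closures of components of f^{-n}(U).\<close>
definition tiles :: "(real^3 \<Rightarrow> real^3) \<Rightarrow> nat \<Rightarrow> (real^3) set \<Rightarrow> (real^3) set set" where
  "tiles f n U = closure ` components (S2 \<inter> (f ^^ n) -` U)"

end

theory Submission
  imports Defs
begin


abbreviation "TS \<equiv> top_of_set S2"

lemma compact_S2: "compact S2" by (simp add: S2_def)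
lemma closed_S2: "closed S2" by (simp add: S2_def)
lemma connected_S2: "connected S2" unfolding S2_def by (rule connected_sphere) simp
lemma locally_connected_S2: "locally connected S2" unfolding S2_def by (rule locally_connected_sphere)
lemma locally_path_connected_S2: "locally path_connected S2" unfolding S2_def by (rule locally_path_connected_sphere)

lemma openin_closure_meet:
  assumes "openin (top_of_set S) X" "A \<subseteq> S" "z \<in> X" "z \<in> closure A"
  shows "X \<inter> A \<noteq> {}"
proof -
  obtain G where G: "open G" "X = S \<inter> G" using assms(1) by (auto simp: openin_open)
  then have "A \<inter> G \<noteq> {}" using assms(3,4) unfolding closure_iff_nhds_not_empty by blast
  then show ?thesis using G assms(2) by blast
qed

lemma connected_sub_closed_sep:
  assumes "connected S" "S \<subseteq> A \<union> B" "closed A" "closed B" "A \<inter> B = {}"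
  shows "S \<subseteq> A \<or> S \<subseteq> B"
  using assms unfolding connected_closed by blast

locale gmap =
  fixes g :: "real^3 \<Rightarrow> real^3" and C :: "(real^3) set"
  assumes cont: "continuous_on S2 g" and gS: "g ` S2 \<subseteq> S2"
    and opn: "\<And>N. openin TS N \<Longrightarrow> openin TS (g ` N)"
    and li: "\<And>x. x \<in> S2 \<Longrightarrow> g x \<notin> C \<Longrightarrow> \<exists>N. x \<in> N \<and> openin TS N \<and> inj_on g N"
begin

lemma openin_pre: "openin TS W \<Longrightarrow> openin TS (S2 \<inter> g -` W)"
  by (rule continuous_openin_preimage[OF cont]) (use gS in auto)

lemma comp_props:
  assumes oW: "openin TS W" and cW: "connected W" and V: "V \<in> components (S2 \<inter> g -` W)"
  shows "openin TS V" "closure V \<inter> (S2 \<inter> g -` W) = V" "closure V \<subseteq> S2" "g ` V = W" "connected V" "V \<noteq> {}"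
proof -
  define Om where "Om = S2 \<inter> g -` W"
  have oO: "openin TS Om" unfolding Om_def by (rule openin_pre[OF oW])
  have "locally connected Om" by (rule locally_open_subset[OF locally_connected_S2 oO])
  have VO': "V \<in> components Om" using V by (simp add: Om_def)
  then have "openin (top_of_set Om) V" using \<open>locally connected Om\<close> openin_components_locally_connected by blast
  then show oV: "openin TS V" using oO openin_trans by blast
  have VO: "V \<subseteq> Om" using VO' in_components_subset by blast
  have OS: "Om \<subseteq> S2" by (simp add: Om_def)
  show cV: "connected V" using V by (rule in_components_connected)
  show Vne: "V \<noteq> {}" using V by (rule in_components_nonempty)
  show clS: "closure V \<subseteq> S2" using VO OS by (intro closure_minimal[OF _ closed_S2]) (rule subset_trans)
  have clO: "closure V \<inter> Om = V"
  proof
    show "V \<subseteq> closure V \<inter> Om" using VO closure_subset by blast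
    show "closure V \<inter> Om \<subseteq> V"
    proof
      fix z assume z: "z \<in> closure V \<inter> Om"
      define V' where "V' = connected_component_set Om z"
      have V'c: "V' \<in> components Om" using z unfolding V'_def components_iff by blast
      have "locally connected Om" by (rule locally_open_subset[OF locally_connected_S2 oO])
      then have "openin (top_of_set Om) V'" using V'c openin_components_locally_connected by blast
      then have oV': "openin TS V'" using oO openin_trans by blast
      have zV': "z \<in> V'" using z unfolding V'_def by simp
      have "V' \<inter> V \<noteq> {}" by (rule openin_closure_meet[OF oV' _ zV']) (use VO OS z in auto)
      then have "V' = V" using components_nonoverlap[OF V'c VO'] by blast
      then show "z \<in> V" using zV' by simp
    qed
  qed
  then show "closure V \<inter> (S2 \<inter> g -` W) = V" by (simp add: Om_def)
  have gVW: "g ` V \<subseteq> W" using VO unfolding Om_def by blast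
  have WS: "W \<subseteq> S2" using oW openin_imp_subset by blast
  have "openin (top_of_set W) (g ` V)"
    by (rule openin_subset_trans[OF opn[OF oV] gVW WS])
  moreover have "closedin (top_of_set W) (g ` V)"
  proof -
    have "bounded (closure V)" using clS bounded_subset[OF compact_imp_bounded[OF compact_S2]] by blast
    then have "compact (closure V)" by (simp add: compact_eq_bounded_closed)
    then have "compact (g ` closure V)" using continuous_on_subset[OF cont clS] by (rule compact_continuous_image[rotated])
    then have cl: "closed (g ` closure V)" by (rule compact_imp_closed)
    have "W \<inter> g ` closure V = g ` V"
    proof
      show "g ` V \<subseteq> W \<inter> g ` closure V" using gVW closure_subset by blast
      show "W \<inter> g ` closure V \<subseteq> g ` V"
      proof
        fix y assume "y \<in> W \<inter> g ` closure V"
        then obtain z where z: "z \<in> closure V" "y = g z" "y \<in> W" by blast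
        then have "z \<in> closure V \<inter> Om" using clS unfolding Om_def by blast
        then show "y \<in> g ` V" using clO z by blast
      qed
    qed
    then show ?thesis using closedin_closed_Int[OF cl, of W] by simp
  qed
  ultimately have "g ` V = {} \<or> g ` V = W" using cW unfolding connected_clopen by blast
  then show "g ` V = W" using Vne by blast
qed

lemma fiber_finite:
  assumes "q \<notin> C"
  shows "finite (S2 \<inter> g -` {q})"
proof (rule ccontr)
  define F where "F = S2 \<inter> g -` {q}"
  assume "\<not> finite (S2 \<inter> g -` {q})"
  then have inf: "infinite F" by (simp add: F_def)
  have "closed {x \<in> S2. g x = q}" by (rule continuous_closed_preimage_constant[OF cont closed_S2])
  moreover have "F = {x \<in> S2. g x = q}" by (auto simp: F_def)
  ultimately have "closed F" by simp
  moreover have "F \<subseteq> S2" by (simp add: F_def)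
  ultimately have "compact F" using compact_S2 by (metis compact_Int_closed inf.absorb2)
  then obtain x where x: "x \<in> F" "x islimpt F"
    using inf unfolding compact_eq_Bolzano_Weierstrass by blast
  then have xS: "x \<in> S2" and gx: "g x = q" by (auto simp: F_def)
  obtain N where N: "x \<in> N" "openin TS N" "inj_on g N" using li[OF xS] gx assms by blast
  obtain G where G: "open G" "N = S2 \<inter> G" using N(2) by (auto simp: openin_open)
  obtain y where y: "y \<in> F" "y \<in> G" "y \<noteq> x" using x(2) G N(1) unfolding islimpt_def by blast
  have "y \<in> N" "g y = g x" using y G gx by (auto simp: F_def)
  then have "y = x" using N inj_onD by metis
  then show False using y by simp
qed

lemma comps_finite:
  assumes oW: "openin TS W" and cW: "connected W" and WC: "W \<inter> C = {}"
  shows "finite (components (S2 \<inter> g -` W))"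
proof (cases "W = {}")
  case True then show ?thesis by simp
next
  case False
  then obtain q where q: "q \<in> W" by blast
  define F where "F = S2 \<inter> g -` {q}"
  have fF: "finite F" unfolding F_def by (rule fiber_finite) (use q WC in blast)
  have "components (S2 \<inter> g -` W) \<subseteq> (\<lambda>x. connected_component_set (S2 \<inter> g -` W) x) ` F"
  proof
    fix V assume V: "V \<in> components (S2 \<inter> g -` W)"
    have "g ` V = W" by (rule comp_props(4)[OF oW cW V])
    then obtain x where x: "x \<in> V" "g x = q" using q by (metis imageE)
    have VO: "V \<subseteq> S2 \<inter> g -` W" using V in_components_subset by blast
    obtain z where "V = connected_component_set (S2 \<inter> g -` W) z" using V components_iff by blast
    then have "V = connected_component_set (S2 \<inter> g -` W) x" using x(1) connected_component_eq by metis
    moreover have "x \<in> F" using x VO by (auto simp: F_def)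
    ultimately show "V \<in> (\<lambda>x. connected_component_set (S2 \<inter> g -` W) x) ` F" by blast
  qed
  then show ?thesis using fF finite_subset by blast
qed

end





lemma power_open: "open U \<Longrightarrow> 1 \<le> d \<Longrightarrow> open ((\<lambda>z::complex. z ^ d) ` U)"
proof (rule open_mapping_thm[of _ UNIV])
  assume d: "1 \<le> d"
  show "\<not> (\<lambda>z::complex. z ^ d) constant_on UNIV"
  proof
    assume "(\<lambda>z::complex. z ^ d) constant_on UNIV"
    then have "(0::complex) ^ d = 1 ^ d" unfolding constant_on_def by (metis UNIV_I)
    then show False using d by (cases d) auto
  qed
qed (auto intro!: holomorphic_intros)

lemma f_open:
  assumes bc: "branched_cover f" and N: "openin TS N"
  shows "openin TS (f ` N)"
proof (subst openin_subopen, intro ballI)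
  fix y assume "y \<in> f ` N"
  then obtain x where x: "x \<in> N" "y = f x" by auto
  have xS: "x \<in> S2" using N x openin_imp_subset by blast
  then obtain d where "local_form f x d" using bc by (auto simp: branched_cover_def)
  then obtain Uc V and \<phi> :: "real^3 \<Rightarrow> complex" and \<phi>' and \<psi> :: "real^3 \<Rightarrow> complex" and \<psi>' where d1: "1 \<le> d" and
    oU: "openin TS Uc" and oV: "openin TS V" and xU: "x \<in> Uc" and fUV: "f ` Uc \<subseteq> V"
    and hU: "homeomorphism Uc (ball 0 1) \<phi> \<phi>'" and hV: "homeomorphism V (ball 0 1) \<psi> \<psi>'"
    and eq: "\<forall>z\<in>ball 0 1. \<psi> (f (\<phi>' z)) = z ^ d"
    unfolding local_form_def by blast
  define M where "M = N \<inter> Uc"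
  have oM: "openin TS M" using N oU by (auto simp: M_def)
  have "openin (top_of_set Uc) M"
    by (rule openin_subset_trans[OF oM]) (use openin_imp_subset[OF oU] in \<open>auto simp: M_def\<close>)
  then have "openin (top_of_set (ball 0 1)) (\<phi> ` M)"
    using homeomorphism_imp_open_map[OF hU] by blast
  then have o1: "open (\<phi> ` M)" using openin_open_trans by blast
  define W0 where "W0 = (\<lambda>z. z ^ d) ` (\<phi> ` M)"
  have oW0: "open W0" unfolding W0_def using power_open[OF o1 d1] .
  have W0b: "W0 \<subseteq> ball 0 1"
  proof
    fix w assume "w \<in> W0"
    then obtain z where z: "z \<in> \<phi> ` M" "w = z ^ d" by (auto simp: W0_def)
    have "z \<in> ball 0 1" using z hU M_def by (auto simp: homeomorphism_def)
    then have "norm z < 1" by simp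
    then have "norm z ^ d < 1" using d1 by (simp add: power_less_one_iff)
    then show "w \<in> ball 0 1" using z by (simp add: norm_power)
  qed
  have hV': "homeomorphism (ball 0 1) V \<psi>' \<psi>" using hV homeomorphism_sym by blast
  have "openin (top_of_set V) (\<psi>' ` W0)"
  proof (rule homeomorphism_imp_open_map[OF hV'])
    show "openin (top_of_set (ball 0 1)) W0"
      using oW0 W0b by (simp add: openin_open_eq)
  qed
  then have oimg: "openin TS (\<psi>' ` W0)" using oV openin_trans by blast
  have img: "\<psi>' ` W0 = f ` M"
  proof -
    have "\<psi>' (\<phi> m ^ d) = f m" if "m \<in> M" for m
    proof -
      have mU: "m \<in> Uc" using that M_def by auto
      have pm: "\<phi> m \<in> ball 0 1" using hU mU by (auto simp: homeomorphism_def)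
      have "\<phi>' (\<phi> m) = m" using hU mU by (simp add: homeomorphism_def)
      then have "\<psi> (f m) = \<phi> m ^ d" using eq pm by metis
      moreover have "f m \<in> V" using fUV mU by auto
      ultimately show ?thesis using hV by (metis homeomorphism_def)
    qed
    then show ?thesis unfolding W0_def image_image by (intro image_cong refl) auto
  qed
  show "\<exists>T. openin TS T \<and> y \<in> T \<and> T \<subseteq> f ` N"
    by (rule exI[of _ "f ` M"]) (use oimg img x xU M_def in auto)
qed

lemma f_locinj:
  assumes bc: "branched_cover f" and xS: "x \<in> S2" and nc: "\<not> critical f x"
  shows "\<exists>N. x \<in> N \<and> openin TS N \<and> inj_on f N"
proof -
  obtain d where "local_form f x d" using bc xS by (auto simp: branched_cover_def)
  moreover have "d = 1"
  proof (rule ccontr)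
    assume "d \<noteq> 1"
    with calculation have "2 \<le> d" by (auto simp: local_form_def)
    then show False using nc xS calculation by (auto simp: critical_def)
  qed
  ultimately obtain Uc V and \<phi> :: "real^3 \<Rightarrow> complex" and \<phi>' and \<psi> :: "real^3 \<Rightarrow> complex" and \<psi>' where
    oU: "openin TS Uc" and xU: "x \<in> Uc" and fUV: "f ` Uc \<subseteq> V"
    and hU: "homeomorphism Uc (ball 0 1) \<phi> \<phi>'" and hV: "homeomorphism V (ball 0 1) \<psi> \<psi>'"
    and eq: "\<forall>z\<in>ball 0 1. \<psi> (f (\<phi>' z)) = z"
    unfolding local_form_def by auto
  have feq: "f m = \<psi>' (\<phi> m)" if mU: "m \<in> Uc" for m
  proof -
    have pm: "\<phi> m \<in> ball 0 1" using hU mU by (auto simp: homeomorphism_def)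
    have "\<phi>' (\<phi> m) = m" using hU mU by (simp add: homeomorphism_def)
    then have "\<psi> (f m) = \<phi> m" using eq pm by metis
    moreover have "f m \<in> V" using fUV mU by auto
    ultimately show ?thesis using hV by (metis homeomorphism_def)
  qed
  have "inj_on f Uc"
  proof (rule inj_onI)
    fix a b assume ab: "a \<in> Uc" "b \<in> Uc" "f a = f b"
    then have "\<psi>' (\<phi> a) = \<psi>' (\<phi> b)" using feq by auto
    then have "\<psi> (\<psi>' (\<phi> a)) = \<psi> (\<psi>' (\<phi> b))" by simp
    moreover have "\<phi> a \<in> ball 0 1" "\<phi> b \<in> ball 0 1" using hU ab by (auto simp: homeomorphism_def)
    ultimately have "\<phi> a = \<phi> b" using hV by (simp add: homeomorphism_def)
    then show "a = b" using hU ab by (metis homeomorphism_def)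
  qed
  then show ?thesis using oU xU by blast
qed

lemma post_inv: "y \<in> post f \<Longrightarrow> f y \<in> post f"
  unfolding post_def
  by clarsimp (metis funpow.simps(2) o_apply le_SucI)

lemma crit_post: "critical f c \<Longrightarrow> f c \<in> post f"
  unfolding post_def by (rule CollectI, rule exI[of _ c], rule exI[of _ 1]) simp

lemma g_cont:
  assumes bc: "branched_cover f"
  shows "continuous_on S2 (f ^^ n) \<and> (f ^^ n) ` S2 \<subseteq> S2"
proof (induction n)
  case 0 then show ?case by (simp add: continuous_on_id)
next
  case (Suc n)
  have c: "continuous_on S2 f" "f ` S2 \<subseteq> S2" using bc by (auto simp: branched_cover_def)
  show ?case using Suc c
    by (auto intro!: continuous_on_compose2[OF c(1)])
qed

lemma g_open:
  assumes bc: "branched_cover f" and N: "openin TS N"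
  shows "openin TS ((f ^^ n) ` N)"
proof (induction n)
  case 0 then show ?case using N by simp
next
  case (Suc n)
  have "(f ^^ Suc n) ` N = f ` ((f ^^ n) ` N)" by auto
  then show ?case using f_open[OF bc] Suc by simp
qed

lemma g_locinj:
  assumes bc: "branched_cover f"
  shows "x \<in> S2 \<Longrightarrow> (f ^^ n) x \<notin> post f \<Longrightarrow> \<exists>N. x \<in> N \<and> openin TS N \<and> inj_on (f ^^ n) N"
proof (induction n)
  case 0 then show ?case by (intro exI[of _ S2]) auto
next
  case (Suc n)
  have np: "(f ^^ n) x \<notin> post f" using Suc.prems post_inv by fastforce
  then obtain N1 where N1: "x \<in> N1" "openin TS N1" "inj_on (f ^^ n) N1" using Suc by blast
  have nc: "\<not> critical f ((f ^^ n) x)" using Suc.prems crit_post by fastforce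
  have yS: "(f ^^ n) x \<in> S2" using g_cont[OF bc] Suc.prems by blast
  obtain N2 where N2: "(f ^^ n) x \<in> N2" "openin TS N2" "inj_on f N2"
    using f_locinj[OF bc yS nc] by blast
  define N where "N = N1 \<inter> (S2 \<inter> (f ^^ n) -` N2)"
  have "openin TS (S2 \<inter> (f ^^ n) -` N2)"
    by (rule continuous_openin_preimage[of _ _ S2]) (use g_cont[OF bc] N2 in auto)
  then have "openin TS N" using N1(2) by (auto simp: N_def)
  moreover have "x \<in> N" using N1 N2 Suc.prems by (auto simp: N_def)
  moreover have "inj_on (f ^^ Suc n) N"
  proof (rule inj_onI)
    fix a b assume ab: "a \<in> N" "b \<in> N" "(f ^^ Suc n) a = (f ^^ Suc n) b"
    then have "(f ^^ n) a = (f ^^ n) b" using N2(3) unfolding N_def inj_on_def by simp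
    then show "a = b" using N1(3) ab unfolding N_def inj_on_def by blast
  qed
  ultimately show ?case by blast
qed




lemma punct_homeo:
  assumes "p \<in> S2"
  obtains h :: "real^3 \<Rightarrow> complex" and k where "homeomorphism (S2 - {p}) UNIV h k"
proof -
  have "(sphere (0::real^3) 1 - {p}) homeomorphic {x::real^3. axis 3 1 \<bullet> x = 0}"
    by (rule homeomorphic_punctured_sphere_hyperplane) (use assms in \<open>auto simp: S2_def axis_eq_0_iff\<close>)
  also have "\<dots> homeomorphic (UNIV::complex set)"
    by (subst homeomorphic_affine_sets_eq) (auto simp: affine_hyperplane aff_dim_hyperplane axis_eq_0_iff)
  finally show ?thesis using that unfolding S2_def homeomorphic_def by blast
qed

lemma compact_closure_sub_S2: "A \<subseteq> S2 \<Longrightarrow> compact (closure A)"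
proof -
  assume "A \<subseteq> S2"
  then have "bounded A" using bounded_subset[OF compact_imp_bounded[OF compact_S2]] by blast
  then show ?thesis by simp
qed

context gmap
begin

lemma covering:
  assumes oW: "openin TS W" and cW: "connected W" and WC: "W \<inter> C = {}"
    and V: "V \<in> components (S2 \<inter> g -` W)"
  shows "covering_space V g W"
proof (rule covering_spaceI)
  have VS: "V \<subseteq> S2 \<inter> g -` W" using V by (rule in_components_subset)
  then have VS2: "V \<subseteq> S2" by blast
  show "continuous_on V g" using continuous_on_subset[OF cont VS2] .
  show gV: "g ` V = W" by (rule comp_props(4)[OF oW cW V])
  have oV: "openin TS V" by (rule comp_props(1)[OF oW cW V])
  have clV: "closure V \<inter> (S2 \<inter> g -` W) = V" by (rule comp_props(2)[OF oW cW V])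
  have clS: "closure V \<subseteq> S2" by (rule comp_props(3)[OF oW cW V])
  have WS: "W \<subseteq> S2" using oW by (rule openin_imp_subset)
  fix q assume q: "q \<in> W"
  have qC: "q \<notin> C" using q WC by blast
  define F where "F = V \<inter> g -` {q}"
  have fF: "finite F" by (rule finite_subset[OF _ fiber_finite[OF qC]]) (use VS2 in \<open>auto simp: F_def\<close>)
  have FV: "F \<subseteq> V" by (auto simp: F_def)
  have "\<forall>x\<in>F. \<exists>N. x \<in> N \<and> openin TS N \<and> inj_on g N"
  proof
    fix x assume x: "x \<in> F"
    then have "x \<in> S2" "g x = q" using VS2 by (auto simp: F_def)
    then show "\<exists>N. x \<in> N \<and> openin TS N \<and> inj_on g N" using li qC by blast
  qed
  then obtain N where N: "\<forall>x\<in>F. x \<in> N x \<and> openin TS (N x) \<and> inj_on g (N x)"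
    using bchoice by metis
  define D where "D = (\<lambda>(a,b). dist a b) ` {(a,b). a \<in> F \<and> b \<in> F \<and> a \<noteq> b}"
  have fD: "finite D" unfolding D_def
    by (rule finite_imageI, rule finite_subset[of _ "F \<times> F"]) (use fF in auto)
  define r where "r = (if D = {} then 1 else Min D / 2)"
  have r0: "r > 0"
  proof (cases "D = {}")
    case True then show ?thesis by (simp add: r_def)
  next
    case False
    then have "Min D \<in> D" using fD by (rule Min_in[rotated])
    then have "Min D > 0" unfolding D_def by auto
    then show ?thesis using False by (simp add: r_def)
  qed
  have sep: "2 * r \<le> dist a b" if "a \<in> F" "b \<in> F" "a \<noteq> b" for a b
  proof -
    have ab: "dist a b \<in> D" using that unfolding D_def by (auto intro!: image_eqI[of _ _ "(a,b)"])
    then have "D \<noteq> {}" by blast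
    then show ?thesis using Min_le[OF fD ab] by (simp add: r_def)
  qed
  define M where "M x = N x \<inter> V \<inter> (S2 \<inter> ball x r)" for x
  have xM: "x \<in> M x" if "x \<in> F" for x using that N FV VS2 r0 by (auto simp: M_def)
  have oM: "openin TS (M x)" if "x \<in> F" for x
  proof -
    have "openin TS (S2 \<inter> ball x r)" by (rule openin_open_Int) simp
    moreover have "openin TS (N x)" using that N by blast
    ultimately show ?thesis unfolding M_def using oV by (intro openin_Int[OF openin_Int]) assumption+
  qed
  have injM: "inj_on g (M x)" if "x \<in> F" for x
    using that N inj_on_subset[of g "N x" "M x"] by (auto simp: M_def)
  have MV: "M x \<subseteq> V" for x by (auto simp: M_def)
  have MS: "M x \<subseteq> S2" for x using MV VS2 by blast
  have disj: "M a \<inter> M b = {}" if "a \<in> F" "b \<in> F" "a \<noteq> b" for a b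
  proof (rule ccontr)
    assume "M a \<inter> M b \<noteq> {}"
    then obtain y where "y \<in> ball a r" "y \<in> ball b r" by (auto simp: M_def)
    then have "dist a y < r" "dist b y < r" by auto
    then have "dist a b < 2 * r" using dist_triangle[of a b y] by (simp add: dist_commute)
    then show False using sep[OF that] by simp
  qed
  have "\<forall>x\<in>F. \<exists>kk. homeomorphism (M x) (g ` M x) g kk"
  proof
    fix x assume x: "x \<in> F"
    obtain kk where "homeomorphism (M x) (g ` M x) g kk"
    proof (rule homeomorphism_injective_open_map)
      show "continuous_on (M x) g" using continuous_on_subset[OF cont MS] .
      show "inj_on g (M x)" using injM[OF x] .
      fix U assume "openin (top_of_set (M x)) U"
      then have oU: "openin TS U" using oM[OF x] openin_trans by blast
      have "g ` U \<subseteq> g ` M x" using oU \<open>openin (top_of_set (M x)) U\<close> openin_imp_subset by blast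
      moreover have "g ` M x \<subseteq> S2" using MS gS by blast
      ultimately show "openin (top_of_set (g ` M x)) (g ` U)"
        using openin_subset_trans[OF opn[OF oU]] by blast
    qed auto
    then show "\<exists>kk. homeomorphism (M x) (g ` M x) g kk" by blast
  qed
  then obtain kk where hom: "\<forall>x\<in>F. homeomorphism (M x) (g ` M x) g (kk x)"
    using bchoice by metis
  define T0 where "T0 = W \<inter> \<Inter>((\<lambda>x. g ` M x) ` F)"
  have oT0: "openin TS T0"
  proof (cases "F = {}")
    case True then show ?thesis using oW by (simp add: T0_def)
  next
    case False
    have "openin TS (\<Inter>((\<lambda>x. g ` M x) ` F))"
      by (rule openin_Inter) (use fF False oM opn in auto)
    then show ?thesis unfolding T0_def using oW by (rule openin_Int[rotated])
  qed
  define K where "K = closure V \<inter> (S2 - \<Union>(M ` F))"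
  have "closedin TS (S2 - \<Union>(M ` F))"
    by (rule closedin_diff[OF closed_subset[OF order_refl closed_S2]]) (use oM in auto)
  then have "closed (S2 - \<Union>(M ` F))" using closedin_closed_trans closed_S2 by blast
  then have clK: "closed K" unfolding K_def by (intro closed_Int) auto
  have KS: "K \<subseteq> S2" by (auto simp: K_def)
  have "compact (S2 \<inter> K)" using compact_S2 clK by (rule compact_Int_closed)
  then have "compact K" using KS by (simp add: inf.absorb2)
  then have "compact (g ` K)" using continuous_on_subset[OF cont KS] by (rule compact_continuous_image[rotated])
  then have cgK: "closed (g ` K)" by (rule compact_imp_closed)
  have qK: "q \<notin> g ` K"
  proof
    assume "q \<in> g ` K"
    then obtain z where z: "z \<in> K" "g z = q" by blast
    then have "z \<in> closure V \<inter> (S2 \<inter> g -` W)" using q by (auto simp: K_def)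
    then have "z \<in> V" using clV by blast
    then have "z \<in> F" using z by (auto simp: F_def)
    then show False using xM z by (auto simp: K_def)
  qed
  define T where "T = T0 - g ` K"
  have "g ` K \<subseteq> S2" using KS gS by blast
  then have "closedin TS (g ` K)" using cgK closed_subset by blast
  then have oT: "openin TS T" unfolding T_def using oT0 by (rule openin_diff[rotated])
  have TW: "T \<subseteq> W" by (auto simp: T_def T0_def)
  have qT: "q \<in> T"
  proof -
    have "q \<in> g ` M x" if "x \<in> F" for x using xM[OF that] that by (auto simp: F_def)
    then show ?thesis using q qK by (auto simp: T_def T0_def)
  qed
  show "\<exists>T. q \<in> T \<and> openin (top_of_set W) T \<and>
        (\<exists>v. \<Union>v = V \<inter> g -` T \<and> (\<forall>u\<in>v. openin (top_of_set V) u) \<and>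
             pairwise disjnt v \<and> (\<forall>u\<in>v. \<exists>q. homeomorphism u T g q))"
  proof (intro exI conjI)
    show "q \<in> T" by (rule qT)
    show "openin (top_of_set W) T" by (rule openin_subset_trans[OF oT TW WS])
    show "\<Union>((\<lambda>x. M x \<inter> g -` T) ` F) = V \<inter> g -` T"
    proof
      show "\<Union>((\<lambda>x. M x \<inter> g -` T) ` F) \<subseteq> V \<inter> g -` T" using MV by blast
      show "V \<inter> g -` T \<subseteq> \<Union>((\<lambda>x. M x \<inter> g -` T) ` F)"
      proof
        fix y assume y: "y \<in> V \<inter> g -` T"
        show "y \<in> \<Union>((\<lambda>x. M x \<inter> g -` T) ` F)"
        proof (rule ccontr)
          assume "y \<notin> \<Union>((\<lambda>x. M x \<inter> g -` T) ` F)"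
          then have "y \<notin> \<Union>(M ` F)" using y by blast
          moreover have "y \<in> closure V" "y \<in> S2" using y closure_subset VS2 by auto
          ultimately have "y \<in> K" by (auto simp: K_def)
          then show False using y by (auto simp: T_def)
        qed
      qed
    qed
    show "\<forall>u\<in>(\<lambda>x. M x \<inter> g -` T) ` F. openin (top_of_set V) u"
    proof
      fix u assume "u \<in> (\<lambda>x. M x \<inter> g -` T) ` F"
      then obtain x where x: "x \<in> F" "u = M x \<inter> g -` T" by blast
      have "u = M x \<inter> (S2 \<inter> g -` T)" using x MS by blast
      moreover have "openin TS (M x \<inter> (S2 \<inter> g -` T))"
        by (rule openin_Int[OF oM[OF x(1)] openin_pre[OF oT]])
      ultimately have "openin TS u" by simp
      then show "openin (top_of_set V) u" by (rule openin_subset_trans) (use x MV VS2 in auto)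
    qed
    show "pairwise disjnt ((\<lambda>x. M x \<inter> g -` T) ` F)"
      unfolding pairwise_def disjnt_def using disj by blast
    show "\<forall>u\<in>(\<lambda>x. M x \<inter> g -` T) ` F. \<exists>q. homeomorphism u T g q"
    proof
      fix u assume "u \<in> (\<lambda>x. M x \<inter> g -` T) ` F"
      then obtain x where x: "x \<in> F" "u = M x \<inter> g -` T" by blast
      have "T \<subseteq> g ` M x" using x(1) by (auto simp: T_def T0_def)
      then have "g ` u = T" using x(2) by blast
      then have "homeomorphism u T g (kk x)"
        by (rule homeomorphism_of_subsets[OF hom[rule_format, OF x(1)], where T''="{}", rotated 2]) (use x in auto)
      then show "\<exists>q. homeomorphism u T g q" by blast
    qed
  qed
qed

end



context gmap
begin

lemma comp_homeo:
  assumes oW: "openin TS W" and cW: "connected W" and WC: "W \<inter> C = {}" and scW: "simply_connected W"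
    and V: "V \<in> components (S2 \<inter> g -` W)"
  obtains s where "homeomorphism V W g s"
proof -
  have cov: "covering_space V g W" by (rule covering[OF oW cW WC V])
  have VS: "V \<subseteq> S2 \<inter> g -` W" using V by (rule in_components_subset)
  then have VS2: "V \<subseteq> S2" by blast
  have oV: "openin TS V" by (rule comp_props(1)[OF oW cW V])
  have cV: "connected V" by (rule comp_props(5)[OF oW cW V])
  obtain a where aV: "a \<in> V" using comp_props(6)[OF oW cW V] by blast
  have zW: "g a \<in> W" using aV VS by blast
  have lpc: "locally path_connected W" by (rule locally_open_subset[OF locally_path_connected_S2 oW])
  have "\<exists>s. continuous_on W s \<and> s \<in> W \<rightarrow> V \<and> s (g a) = a \<and> (\<forall>y\<in>W. g (s y) = id y)"
    by (rule covering_space_lift_strong[OF cov aV zW scW lpc, of id]) (auto simp: continuous_on_id)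
  then obtain s where s: "continuous_on W s" "s \<in> W \<rightarrow> V" "s (g a) = a" "\<And>y. y \<in> W \<Longrightarrow> g (s y) = id y"
    by blast
  have gs: "g (s y) = y" if "y \<in> W" for y using s(4)[OF that] by simp
  have sV: "s y \<in> V" if "y \<in> W" for y using s(2) that by blast
  have gV: "g v \<in> W" if "v \<in> V" for v using VS that by blast
  have contg: "continuous_on V g" using continuous_on_subset[OF cont VS2] .
  have contsg: "continuous_on V (\<lambda>v. s (g v))"
    by (rule continuous_on_compose2[OF s(1) contg]) (use gV in blast)
  define E where "E = {v \<in> V. s (g v) = v}"
  have "closedin (top_of_set V) {v \<in> V. s (g v) - v = 0}"
    by (rule continuous_closedin_preimage_constant) (intro continuous_on_diff contsg continuous_on_id)
  then have clE: "closedin (top_of_set V) E" by (simp add: E_def)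
  have oE: "openin (top_of_set V) E"
  proof (subst openin_subopen, intro ballI)
    fix v assume vE: "v \<in> E"
    then have vV: "v \<in> V" and sv: "s (g v) = v" by (auto simp: E_def)
    have "g v \<notin> C" using gV[OF vV] WC by blast
    then obtain N where N: "v \<in> N" "openin TS N" "inj_on g N" using li VS2 vV by blast
    have oP: "openin (top_of_set V) (V \<inter> (\<lambda>w. s (g w)) -` N)"
      by (rule continuous_openin_preimage[OF contsg _ N(2)]) (use sV gV VS2 in blast)
    have "openin TS (V \<inter> N)" using oV N(2) by (rule openin_Int)
    then have oVN: "openin (top_of_set V) (V \<inter> N)" by (rule openin_subset_trans) (use VS2 in auto)
    define Q where "Q = (V \<inter> (\<lambda>w. s (g w)) -` N) \<inter> (V \<inter> N)"
    have "openin (top_of_set V) Q" unfolding Q_def using oP oVN by (rule openin_Int)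
    moreover have "v \<in> Q" using vV sv N(1) by (simp add: Q_def)
    moreover have "Q \<subseteq> E"
    proof
      fix w assume w: "w \<in> Q"
      then have wV: "w \<in> V" and swN: "s (g w) \<in> N" and wN: "w \<in> N" by (auto simp: Q_def)
      have "g (s (g w)) = g w" using gs[OF gV[OF wV]] .
      then have "s (g w) = w" using inj_onD[OF N(3) _ swN wN] by blast
      then show "w \<in> E" using wV by (simp add: E_def)
    qed
    ultimately show "\<exists>T. openin (top_of_set V) T \<and> v \<in> T \<and> T \<subseteq> E" by blast
  qed
  have "E = {} \<or> E = V" using cV oE clE unfolding connected_clopen by blast
  moreover have "a \<in> E" using aV s(3) by (simp add: E_def)
  ultimately have EV: "E = V" by blast
  have sg: "s (g v) = v" if "v \<in> V" for v using that EV by (auto simp: E_def)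
  have "homeomorphism V W g s"
    unfolding homeomorphism_def
  proof (intro conjI ballI)
    show "s (g x) = x" if "x \<in> V" for x using sg that .
    show "g ` V = W" by (rule comp_props(4)[OF oW cW V])
    show "continuous_on V g" by (rule contg)
    show "g (s y) = y" if "y \<in> W" for y using gs that .
    show "s ` W = V"
    proof
      show "s ` W \<subseteq> V" using sV by blast
      show "V \<subseteq> s ` W"
      proof
        fix v assume v: "v \<in> V"
        show "v \<in> s ` W" by (rule rev_image_eqI[OF gV[OF v]]) (use sg[OF v] in simp)
      qed
    qed
    show "continuous_on W s" by (rule s(1))
  qed
  then show ?thesis by (rule that)
qed

lemma frontier_conn:
  assumes oW: "openin TS W" and cW: "connected W" and WC: "W \<inter> C = {}" and scW: "simply_connected W"
    and V: "V \<in> components (S2 \<inter> g -` W)" and pS: "p \<in> S2" and pV: "p \<notin> closure V"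
  shows "connected (closure V - V)"
proof -
  obtain s where hs: "homeomorphism V W g s" by (rule comp_homeo[OF oW cW WC scW V])
  have hVW: "V homeomorphic W" using hs unfolding homeomorphic_def by blast
  have scV: "simply_connected V" using homeomorphic_simply_connected_eq[OF hVW] scW by simp
  obtain h :: "real^3 \<Rightarrow> complex" and k where hk: "homeomorphism (S2 - {p}) UNIV h k"
    using punct_homeo[OF pS] by blast
  have hcont: "continuous_on (S2 - {p}) h" and kcont: "continuous_on UNIV k"
    and kh: "\<And>x. x \<in> S2 - {p} \<Longrightarrow> k (h x) = x"
    using hk by (auto simp: homeomorphism_def)
  have clS: "closure V \<subseteq> S2" by (rule comp_props(3)[OF oW cW V])
  have clVp: "closure V \<subseteq> S2 - {p}" using clS pV by blast
  have Vp: "V \<subseteq> S2 - {p}" using clVp closure_subset by blast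
  have oV: "openin TS V" by (rule comp_props(1)[OF oW cW V])
  have "openin (top_of_set (S2 - {p})) V" by (rule openin_subset_trans[OF oV Vp]) blast
  then have "openin (top_of_set UNIV) (h ` V)" by (rule homeomorphism_imp_open_map[OF hk])
  then have oV': "open (h ` V)" by (simp add: openin_open_trans)
  have "homeomorphism V (h ` V) h k"
    by (rule homeomorphism_of_subsets[OF hk Vp, where T''="{}"]) auto
  then have "V homeomorphic (h ` V)" unfolding homeomorphic_def by blast
  then have scV': "simply_connected (h ` V)" using scV homeomorphic_simply_connected by blast
  have hcl: "continuous_on (closure V) h" using continuous_on_subset[OF hcont clVp] .
  have "compact (closure V)" using clS by (rule compact_closure_sub_S2[OF subset_trans[OF closure_subset]])
  then have chcl: "compact (h ` closure V)" using hcl by (rule compact_continuous_image[rotated])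
  have hVcl: "h ` V \<subseteq> h ` closure V" by (rule image_mono[OF closure_subset])
  have bnd: "bounded (h ` V)"
    by (rule bounded_subset[OF compact_imp_bounded[OF chcl] hVcl])
  have "connected (h ` V) \<and> (if bounded (h ` V) then connected (frontier (h ` V))
             else (\<forall>C \<in> components(frontier (h ` V)). \<not>bounded C))"
    using simply_connected_eq_frontier_properties[OF oV'] scV' by blast
  then have cfr: "connected (frontier (h ` V))" using bnd by (simp only: if_True)
  have clh: "closure (h ` V) = h ` closure V"
  proof
    show "closure (h ` V) \<subseteq> h ` closure V"
      by (rule closure_minimal[OF hVcl compact_imp_closed[OF chcl]])
    show "h ` closure V \<subseteq> closure (h ` V)"
      by (rule image_closure_subset[OF hcl closed_closure closure_subset])
  qed
  have fr: "frontier (h ` V) = closure (h ` V) - h ` V"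
    using interior_open[OF oV'] by (simp add: frontier_def)
  have hinj: "inj_on h (S2 - {p})" using kh by (metis inj_onI)
  have eq: "closure V - V = k ` frontier (h ` V)"
  proof
    show "closure V - V \<subseteq> k ` frontier (h ` V)"
    proof
      fix x assume x: "x \<in> closure V - V"
      have "h x \<notin> h ` V"
      proof
        assume "h x \<in> h ` V"
        then obtain v where v: "v \<in> V" "h x = h v" by blast
        have xp: "x \<in> S2 - {p}" using x clVp by blast
        have vp: "v \<in> S2 - {p}" using v Vp by blast
        have "x = v" using inj_onD[OF hinj v(2) xp vp] .
        then show False using x v by blast
      qed
      then have hf: "h x \<in> frontier (h ` V)" using x unfolding fr clh by blast
      have "k (h x) = x" using x clVp kh by blast
      then show "x \<in> k ` frontier (h ` V)" by (intro rev_image_eqI[OF hf]) simp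
    qed
    show "k ` frontier (h ` V) \<subseteq> closure V - V"
    proof
      fix y assume "y \<in> k ` frontier (h ` V)"
      then obtain w where w: "w \<in> frontier (h ` V)" "y = k w" by blast
      then obtain x where x: "x \<in> closure V" "w = h x" unfolding fr clh by blast
      then have "x \<notin> V" using w unfolding fr by blast
      moreover have "k w = x" using x clVp kh by blast
      ultimately show "y \<in> closure V - V" using x w by blast
    qed
  qed
  show ?thesis unfolding eq
    by (rule connected_continuous_image[OF continuous_on_subset[OF kcont] cfr]) simp
qed

end



lemma openin_S2_open_image:
  assumes hk: "homeomorphism (S2 - {p}) UNIV h k" and pS: "p \<in> S2" and "open I"
  shows "openin TS (k ` I)"
proof -
  have kim: "range k = S2 - {p}" "\<And>w. h (k w) = w" "\<And>x. x\<in>S2-{p} \<Longrightarrow> k(h x) = x"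
    using hk by (auto simp: homeomorphism_def)
  have eq: "k ` I = (S2 - {p}) \<inter> h -` I"
  proof
    show "k ` I \<subseteq> (S2 - {p}) \<inter> h -` I" using kim by auto
    show "(S2 - {p}) \<inter> h -` I \<subseteq> k ` I"
    proof
      fix x assume "x \<in> (S2 - {p}) \<inter> h -` I"
      then show "x \<in> k ` I" using kim(3)[of x] by (metis IntD1 IntD2 image_eqI vimageE)
    qed
  qed
  have "openin (top_of_set (S2 - {p})) ((S2 - {p}) \<inter> h -` I)"
    using continuous_openin_preimage[of "S2 - {p}" h UNIV I] hk assms(3)
    by (auto simp: homeomorphism_def)
  moreover have "openin TS (S2 - {p})"
    by (rule openin_diff) (use pS in auto)
  ultimately show ?thesis using eq openin_trans by metis
qed

lemma jordan_facts:
  assumes J: "jordan_curve C" and Uc: "U \<in> components (S2 - C)"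
  shows "openin TS U \<and> connected U \<and> U \<noteq> {} \<and> C \<subseteq> closure U \<and> compact C \<and> C \<subseteq> S2 \<and>
         openin TS (S2 - C - U) \<and> connected (S2 - C - U) \<and> simply_connected (S2 - C - U)"
proof -
  obtain \<gamma> where sp: "simple_path \<gamma>" and cl: "pathfinish \<gamma> = pathstart \<gamma>"
    and CS: "path_image \<gamma> \<subseteq> S2" and Ceq: "C = path_image \<gamma>"
    using J unfolding jordan_curve_def by blast
  have cC: "compact C" using Ceq sp by (simp add: compact_simple_path_image)
  have CS2: "C \<subseteq> S2" using Ceq CS by simp
  have UsubS: "U \<subseteq> S2 - C" using Uc by (rule in_components_subset)
  have Une: "U \<noteq> {}" using Uc by (rule in_components_nonempty)
  have Ucon: "connected U" using Uc by (rule in_components_connected)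
  have "closedin TS C" by (rule closed_subset[OF CS2 compact_imp_closed[OF cC]])
  then have oSC: "openin TS (S2 - C)"
    by (rule openin_diff[OF openin_subtopology_self])
  have "locally connected (S2 - C)" using locally_open_subset[OF locally_connected_S2 oSC] .
  then have "openin (top_of_set (S2 - C)) U" using Uc by (rule openin_components_locally_connected)
  then have oU: "openin TS U" using oSC by (rule openin_trans)
  obtain p where pU: "p \<in> U" using Une by blast
  have pS: "p \<in> S2" and pC: "p \<notin> C" using pU UsubS by auto
  obtain h :: "real^3 \<Rightarrow> complex" and k where hk: "homeomorphism (S2 - {p}) UNIV h k"
    using punct_homeo[OF pS] by blast
  have hcont: "continuous_on (S2 - {p}) h" and kcont: "continuous_on UNIV k"
    and kim: "k ` UNIV = S2 - {p}" and kh: "\<And>x. x \<in> S2 - {p} \<Longrightarrow> k (h x) = x"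
    and hk': "\<And>w. h (k w) = w"
    using hk by (auto simp: homeomorphism_def)
  have kcont': "continuous_on A k" for A using kcont continuous_on_subset by blast
  have CSp: "C \<subseteq> S2 - {p}" using CS2 pC by auto
  have hinj: "inj_on h (S2 - {p})" using kh by (metis inj_onI)
  define c where "c = h \<circ> \<gamma>"
  have spc: "simple_path c" unfolding c_def
  proof (rule simple_path_continuous_image[OF sp])
    show "continuous_on (path_image \<gamma>) h" using continuous_on_subset[OF hcont] CSp Ceq by simp
    show "inj_on h (path_image \<gamma>)" using inj_on_subset[OF hinj] CSp Ceq by simp
  qed
  have clc: "pathfinish c = pathstart c" using cl by (simp add: c_def pathfinish_compose pathstart_compose)
  have pic: "path_image c = h ` C" by (simp add: c_def Ceq path_image_compose)
  define I where "I = inside (h ` C)"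
  define Ot where "Ot = outside (h ` C)"
  note JO = Jordan_inside_outside[OF spc clc, unfolded pic, folded I_def Ot_def]
  have Ine: "I \<noteq> {}" and oI: "open I" and cI: "connected I" and bI: "bounded I"
    and oO: "open Ot" and cO: "connected Ot" and ubO: "\<not> bounded Ot"
    and IO: "I \<union> Ot = - h ` C" and frI: "frontier I = h ` C" and frO: "frontier Ot = h ` C"
    using JO by auto
  have IC: "w \<notin> h ` C" if "w \<in> I" for w using IO that by blast
  have OC: "w \<notin> h ` C" if "w \<in> Ot" for w using IO that by blast
  have kS: "k w \<in> S2 - {p}" for w using kim by blast
  have kC: "k w \<notin> C" if "w \<notin> h ` C" for w
    using that hk' by (metis image_eqI)
  have kOt: "k ` Ot \<subseteq> U"
  proof (rule components_maximal[OF Uc])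
    show "connected (k ` Ot)" using cO kcont' by (rule connected_continuous_image[rotated])
    show "k ` Ot \<subseteq> S2 - C"
    proof
      fix y assume "y \<in> k ` Ot"
      then obtain w where "w \<in> Ot" "y = k w" by blast
      then show "y \<in> S2 - C" using kS[of w] kC[OF OC] by blast
    qed
    obtain e where e: "e > 0" "\<forall>x'\<in>S2. dist x' p < e \<longrightarrow> x' \<in> U"
      using oU pU unfolding openin_euclidean_subtopology_iff by blast
    define K0 where "K0 = S2 \<inter> - ball p e"
    have cK0: "compact K0" unfolding K0_def by (rule compact_Int_closed) (auto simp: compact_S2)
    have K0S: "K0 \<subseteq> S2 - {p}" using e by (auto simp: K0_def)
    have "compact (h ` K0)" using continuous_on_subset[OF hcont K0S] cK0 by (rule compact_continuous_image)
    then have "bounded (h ` K0)" by (rule compact_imp_bounded)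
    then obtain B where B: "\<forall>w\<in>h ` K0. norm w \<le> B" unfolding bounded_iff by blast
    have "\<exists>w\<in>Ot. \<not> norm w \<le> B" using ubO unfolding bounded_iff by blast
    then obtain w where w: "w \<in> Ot" "B < norm w" unfolding not_le by blast
    have "k w \<notin> K0"
    proof
      assume "k w \<in> K0" then have "h (k w) \<in> h ` K0" by (rule imageI)
      then have "norm (h (k w)) \<le> B" using B by blast
      then have "norm w \<le> B" by (simp only: hk')
      then show False using w by simp
    qed
    then have "k w \<in> U" using e kS[of w] by (auto simp: K0_def dist_commute)
    then show "U \<inter> k ` Ot \<noteq> {}" using w by blast
  qed
  have F2: "S2 - C - U \<subseteq> k ` I"
  proof
    fix x assume x: "x \<in> S2 - C - U"
    then have xp: "x \<in> S2 - {p}" using pU by auto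
    have "h x \<notin> h ` C"
    proof
      assume "h x \<in> h ` C"
      then obtain y where y: "y \<in> C" "h x = h y" by auto
      moreover have "y \<in> S2 - {p}" using y CSp by blast
      ultimately have "x = y" using xp inj_onD[OF hinj] by blast
      then show False using x y by blast
    qed
    then have "h x \<in> I \<or> h x \<in> Ot" using IO by blast
    moreover have "h x \<notin> Ot"
    proof
      assume "h x \<in> Ot"
      then have "k (h x) \<in> U" using kOt by blast
      then show False using kh[OF xp] x by simp
    qed
    ultimately have "h x \<in> I" by blast
    then show "x \<in> k ` I" using kh[OF xp] by (metis image_eqI)
  qed
  have kIS: "k ` I \<subseteq> S2 - C"
  proof
    fix y assume "y \<in> k ` I"
    then obtain w where "w \<in> I" "y = k w" by blast
    then show "y \<in> S2 - C" using kS[of w] kC[OF IC] by blast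
  qed
  have ckI: "connected (k ` I)" using cI kcont' by (rule connected_continuous_image[rotated])
  have okI: "openin TS (k ` I)" using openin_S2_open_image[OF hk pS oI] .
  have F3: "k ` I \<inter> U = {}"
  proof (rule ccontr)
    assume ne: "k ` I \<inter> U \<noteq> {}"
    have kIU: "k ` I \<subseteq> U"
      by (rule components_maximal[OF Uc ckI kIS]) (use ne in blast)
    have "openin (top_of_set U) (k ` I)"
      by (rule openin_subset_trans[OF okI kIU]) (use UsubS in blast)
    moreover have "closedin (top_of_set U) (k ` I)"
    proof -
      have "compact (closure I)" using bI by simp
      then have "compact (k ` closure I)" using kcont' by (rule compact_continuous_image[rotated])
      then have ccl: "closed (k ` closure I)" by (rule compact_imp_closed)
      have clI: "closure I = I \<union> h ` C" using frI closure_Un_frontier by metis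
      have "U \<inter> k ` closure I = k ` I"
      proof
        show "U \<inter> k ` closure I \<subseteq> k ` I"
        proof
          fix y assume y: "y \<in> U \<inter> k ` closure I"
          then obtain w where w: "w \<in> I \<union> h ` C" "y = k w" using clI by blast
          show "y \<in> k ` I"
          proof (cases "w \<in> I")
            case True then show ?thesis using w by blast
          next
            case False
            then obtain z where z: "z \<in> C" "w = h z" using w by blast
            then have "y = z" using w kh CSp by blast
            then show ?thesis using y z UsubS by blast
          qed
        qed
        show "k ` I \<subseteq> U \<inter> k ` closure I" using kIU closure_subset by blast
      qed
      then show ?thesis using closedin_closed_Int[OF ccl, of U] by simp
    qed
    ultimately have "k ` I = {} \<or> k ` I = U" using Ucon unfolding connected_clopen by blast
    moreover have "k ` I \<noteq> {}" using Ine by blast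
    moreover have "p \<notin> k ` I" using kS by blast
    ultimately show False using pU by blast
  qed
  have U'eq: "S2 - C - U = k ` I" using F2 F3 kIS by blast
  have F4: "C \<subseteq> closure U"
  proof
    fix x assume xC: "x \<in> C"
    have "h x \<in> frontier Ot" using frO xC by simp
    then have "h x \<in> closure Ot" by (simp add: frontier_def)
    moreover have "k ` closure Ot \<subseteq> closure (k ` Ot)"
      by (rule image_closure_subset[OF kcont' closed_closure closure_subset])
    ultimately have "k (h x) \<in> closure U" using closure_mono[OF kOt] by blast
    moreover have "k (h x) = x" using kh CSp xC by blast
    ultimately show "x \<in> closure U" by simp
  qed
  have "simply_connected I" unfolding I_def using simply_connected_inside_simple_path[OF spc] pic by simp
  moreover have "I homeomorphic k ` I"
  proof -
    have "homeomorphism UNIV (S2 - {p}) k h" using hk by (rule homeomorphism_symD)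
    then have "homeomorphism I (k ` I) k h"
      by (rule homeomorphism_of_subsets[where T''="{}"]) auto
    then show ?thesis unfolding homeomorphic_def by blast
  qed
  ultimately have sc: "simply_connected (S2 - C - U)" unfolding U'eq by (rule homeomorphic_simply_connected[rotated])
  show ?thesis unfolding U'eq using oU Ucon Une F4 cC CS2 sc ckI okI unfolding U'eq by (intro conjI) assumption+
qed




context gmap
begin

lemma main_conn:
  assumes J: "jordan_curve C" and Uc: "U \<in> components (S2 - C)"
  shows "connected (\<Union> (closure ` components (S2 \<inter> g -` U)))"
proof -
  define W where "W = S2 - C - U"
  have jf: "openin TS U \<and> connected U \<and> U \<noteq> {} \<and> C \<subseteq> closure U \<and> compact C \<and> C \<subseteq> S2 \<and>
         openin TS W \<and> connected W \<and> simply_connected W"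
    unfolding W_def by (rule jordan_facts[OF J Uc])
  have oU: "openin TS U" and cU: "connected U" and CclU: "C \<subseteq> closure U"
    and oW: "openin TS W" and cW: "connected W" and scW: "simply_connected W"
    using jf by auto
  have US: "U \<subseteq> S2 - C" using Uc by (rule in_components_subset)
  have UC: "U \<inter> C = {}" using US by blast
  have WC: "W \<inter> C = {}" by (auto simp: W_def)
  have UW: "U \<inter> W = {}" by (auto simp: W_def)
  have US2: "U \<subseteq> S2" using US by blast
  define Om where "Om = S2 \<inter> g -` U"
  define Om' where "Om' = S2 \<inter> g -` W"
  have OO: "Om \<inter> Om' = {}" using UW by (auto simp: Om_def Om'_def)
  have oOm: "openin TS Om" unfolding Om_def by (rule openin_pre[OF oU])
  have oOm': "openin TS Om'" unfolding Om'_def by (rule openin_pre[OF oW])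
  have finO: "finite (components Om)" unfolding Om_def by (rule comps_finite[OF oU cU UC])
  have finO': "finite (components Om')" unfolding Om'_def by (rule comps_finite[OF oW cW WC])
  define Y where "Y = \<Union> (closure ` components Om)"
  have clY: "closed Y" unfolding Y_def using finO by (intro closed_Union) auto
  have clSO: "closure V \<subseteq> S2" if "V \<in> components Om" for V
    using comp_props(3)[OF oU cU that[unfolded Om_def]] .
  have clSO': "closure V \<subseteq> S2" if "V \<in> components Om'" for V
    using comp_props(3)[OF oW cW that[unfolded Om'_def]] .
  have clO': "closure V \<inter> Om' = V" if "V \<in> components Om'" for V
    using comp_props(2)[OF oW cW that[unfolded Om'_def]] by (simp add: Om'_def)
  have oV': "openin TS V" if "V \<in> components Om'" for V
    using comp_props(1)[OF oW cW that[unfolded Om'_def]] .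
  have YS: "Y \<subseteq> S2" unfolding Y_def using clSO by blast
  have YO': "Y \<inter> Om' = {}"
  proof (rule ccontr)
    assume "Y \<inter> Om' \<noteq> {}"
    then obtain z V0 where z: "z \<in> closure V0" "V0 \<in> components Om" "z \<in> Om'" unfolding Y_def by blast
    have V0O: "V0 \<subseteq> Om" using z(2) by (rule in_components_subset)
    then have "Om' \<inter> V0 \<noteq> {}" using openin_closure_meet[OF oOm' _ z(3) z(1)] by (auto simp: Om_def)
    then show False using V0O OO by blast
  qed
  have OmY: "Om \<subseteq> Y"
  proof
    fix x assume x: "x \<in> Om"
    have "connected_component_set Om x \<in> components Om" using x unfolding components_iff by blast
    moreover have "x \<in> closure (connected_component_set Om x)"
      using x by (intro closure_subset[THEN subsetD]) simp
    ultimately show "x \<in> Y" unfolding Y_def by blast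
  qed
  have cover: "S2 \<subseteq> Y \<union> Om'"
  proof
    fix x assume xS: "x \<in> S2"
    have gx: "g x \<in> S2" using xS gS by blast
    consider "g x \<in> U" | "g x \<in> W" | "g x \<in> C" unfolding W_def using gx by blast
    then show "x \<in> Y \<union> Om'"
    proof cases
      case 1 then show ?thesis using OmY xS by (auto simp: Om_def)
    next
      case 2 then show ?thesis using xS by (auto simp: Om'_def)
    next
      case 3
      have "x \<in> closure Om"
      proof (subst closure_approachable, intro allI impI)
        fix e :: real assume e: "e > 0"
        have oN: "openin TS (S2 \<inter> ball x e)" by (rule openin_open_Int) simp
        have "g x \<in> g ` (S2 \<inter> ball x e)" using xS e by simp
        then have "g ` (S2 \<inter> ball x e) \<inter> U \<noteq> {}"
          using openin_closure_meet[OF opn[OF oN] US2] 3 CclU by blast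
        then obtain y where y: "y \<in> S2" "y \<in> ball x e" "g y \<in> U" by blast
        then have "y \<in> Om" "dist y x < e" by (auto simp: Om_def dist_commute)
        then show "\<exists>y\<in>Om. dist y x < e" by blast
      qed
      moreover have "closure Om \<subseteq> Y" by (rule closure_minimal[OF OmY clY])
      ultimately show ?thesis by blast
    qed
  qed
  have "connected Y"
  proof (rule ccontr)
    assume "\<not> connected Y"
    then obtain A0 B0 where AB0: "closed A0" "closed B0" "Y \<subseteq> A0 \<union> B0" "A0 \<inter> B0 \<inter> Y = {}"
      "A0 \<inter> Y \<noteq> {}" "B0 \<inter> Y \<noteq> {}"
      unfolding connected_closed by blast
    define A where "A = A0 \<inter> Y"
    define B where "B = B0 \<inter> Y"
    have clA: "closed A" and clB: "closed B" using AB0 clY by (auto simp: A_def B_def)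
    have AB: "A \<inter> B = {}" "Y = A \<union> B" "A \<noteq> {}" "B \<noteq> {}" using AB0 by (auto simp: A_def B_def)
    have AO': "A \<inter> Om' = {}" and BO': "B \<inter> Om' = {}" using YO' AB by auto
    have "Om \<noteq> {}"
    proof
      assume "Om = {}"
      then have "Y = {}" by (simp add: Y_def)
      then show False using AB by blast
    qed
    then obtain p where pO: "p \<in> Om" by blast
    have pS: "p \<in> S2" using pO by (simp add: Om_def)
    have bdY: "closure V - V \<subseteq> Y" if V: "V \<in> components Om'" for V
    proof
      fix z assume z: "z \<in> closure V - V"
      then have "z \<notin> Om'" using clO'[OF V] by blast
      moreover have "z \<in> S2" using z clSO'[OF V] by blast
      ultimately show "z \<in> Y" using cover by blast
    qed
    have bdAB: "closure V - V \<subseteq> A \<or> closure V - V \<subseteq> B" if V: "V \<in> components Om'" for V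
    proof (rule connected_sub_closed_sep[OF _ _ clA clB AB(1)])
      have VO': "V \<subseteq> Om'" using V by (rule in_components_subset)
      have pV: "p \<notin> closure V"
      proof
        assume "p \<in> closure V"
        then have "Om \<inter> V \<noteq> {}" using openin_closure_meet[OF oOm _ pO] VO' by (auto simp: Om'_def)
        then show False using VO' OO by blast
      qed
      show "connected (closure V - V)"
        by (rule frontier_conn[OF oW cW WC scW V[unfolded Om'_def] pS pV])
      show "closure V - V \<subseteq> A \<union> B" using bdY[OF V] AB by blast
    qed
    define VA where "VA = {V \<in> components Om'. closure V - V \<subseteq> A}"
    define VB where "VB = {V \<in> components Om'. \<not> (closure V - V \<subseteq> A)}"
    have VBB: "closure V - V \<subseteq> B" if "V \<in> VB" for V using that bdAB by (auto simp: VB_def)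
    define SA where "SA = A \<union> \<Union>(closure ` VA)"
    define SB where "SB = B \<union> \<Union>(closure ` VB)"
    have clSA: "closed SA" unfolding SA_def using clA finO'
      by (intro closed_Un closed_Union) (auto simp: VA_def)
    have clSB: "closed SB" unfolding SB_def using clB finO'
      by (intro closed_Un closed_Union) (auto simp: VB_def)
    have cov2: "S2 \<subseteq> SA \<union> SB"
    proof
      fix x assume "x \<in> S2"
      then have "x \<in> Y \<or> x \<in> Om'" using cover by blast
      then show "x \<in> SA \<union> SB"
      proof
        assume "x \<in> Y" then show ?thesis using AB by (auto simp: SA_def SB_def)
      next
        assume x: "x \<in> Om'"
        define V where "V = connected_component_set Om' x"
        have V: "V \<in> components Om'" using x unfolding components_iff V_def by blast
        have "x \<in> closure V" using x by (intro closure_subset[THEN subsetD]) (simp add: V_def)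
        then show ?thesis using V by (auto simp: SA_def SB_def VA_def VB_def)
      qed
    qed
    have disj: "SA \<inter> SB = {}"
    proof (rule ccontr)
      assume "SA \<inter> SB \<noteq> {}"
      then obtain z where zA: "z \<in> SA" and zB: "z \<in> SB" by blast
      show False
      proof (cases "z \<in> Om'")
        case True
        then have "z \<notin> A" "z \<notin> B" using AO' BO' by auto
        then obtain V1 V2 where V1: "V1 \<in> VA" "z \<in> closure V1" and V2: "V2 \<in> VB" "z \<in> closure V2"
          using zA zB by (auto simp: SA_def SB_def)
        have c1: "V1 \<in> components Om'" and c2: "V2 \<in> components Om'" using V1 V2 by (auto simp: VA_def VB_def)
        have "z \<in> V1" using clO'[OF c1] V1 True by blast
        moreover have "z \<in> V2" using clO'[OF c2] V2 True by blast
        ultimately have "V1 = V2" using components_nonoverlap[OF c1 c2] by blast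
        then show False using V1 V2 by (auto simp: VA_def VB_def)
      next
        case False
        have inA: "z \<in> A"
        proof -
          have "z \<in> A \<or> (\<exists>V\<in>VA. z \<in> closure V)" using zA by (auto simp: SA_def)
          then show ?thesis
          proof
            assume "\<exists>V\<in>VA. z \<in> closure V"
            then obtain V where V: "V \<in> VA" "z \<in> closure V" by blast
            have "V \<subseteq> Om'" using V by (auto simp: VA_def dest: in_components_subset)
            then have "z \<in> closure V - V" using V False by blast
            then show ?thesis using V by (auto simp: VA_def)
          qed
        qed
        have inB: "z \<in> B"
        proof -
          have "z \<in> B \<or> (\<exists>V\<in>VB. z \<in> closure V)" using zB by (auto simp: SB_def)
          then show ?thesis
          proof
            assume "\<exists>V\<in>VB. z \<in> closure V"
            then obtain V where V: "V \<in> VB" "z \<in> closure V" by blast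
            have "V \<subseteq> Om'" using V by (auto simp: VB_def dest: in_components_subset)
            then have "z \<in> closure V - V" using V False by blast
            then show ?thesis using VBB[OF V(1)] by blast
          qed
        qed
        show False using inA inB AB(1) by blast
      qed
    qed
    have "SA \<inter> S2 \<noteq> {}" using AB YS by (auto simp: SA_def)
    moreover have "SB \<inter> S2 \<noteq> {}" using AB YS by (auto simp: SB_def)
    ultimately show False
      using connected_S2 clSA clSB cov2 disj unfolding connected_closed by blast
  qed
  then show ?thesis by (simp add: Y_def Om_def)
qed

end


theorem lemma2p1:
  fixes f :: "real^3 \<Rightarrow> real^3" and C :: "(real^3) set" and n :: nat
  assumes "thurston_map f"
    and "jordan_curve C"
    and "post f \<subseteq> C"
    and "U \<in> components (S2 - C)"
  shows "connected (\<Union> (tiles f n U))"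
proof -
  have bc: "branched_cover f" using assms(1) by (simp add: thurston_map_def)
  have gm: "gmap (f ^^ n) C"
  proof
    show "continuous_on S2 (f ^^ n)" using g_cont[OF bc] by blast
    show "(f ^^ n) ` S2 \<subseteq> S2" using g_cont[OF bc] by blast
    show "openin TS ((f ^^ n) ` N)" if "openin TS N" for N using g_open[OF bc that] .
    show "\<exists>N. x \<in> N \<and> openin TS N \<and> inj_on (f ^^ n) N" if "x \<in> S2" "(f ^^ n) x \<notin> C" for x
      using g_locinj[OF bc that(1)] that(2) assms(3) by blast
  qed
  show ?thesis unfolding tiles_def by (rule gmap.main_conn[OF gm assms(2) assms(4)])
qed

end
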